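(* For the binary tree-shifts $X_5=(A,E)$ and $X_7=(A,G)$, the limit $h_{PS}$ exists and $$h_{PS}(X_5)=h_{PS}(X_7)=\sum_{n=2}^\infty\frac{\log n}{2^n}.$$
   Context: Binary tree-shifts: $k=2$, directions $a_1,a_2$, alphabet $\{0,1\}$; $(P,Q)$ is the set of trees $t:\{a_1,a_2\}^*\to\{0,1\}$ with $P_{t_x,t_{xa_1}}=1$, $Q_{t_x,t_{xa_2}}=1$ for all nodes $x$. Matrices: $A=\begin{pmatrix}1&1\\1&1\end{pmatrix}$, $E=\begin{pmatrix}1&0\\1&1\end{pmatrix}$, $G=\begin{pmatrix}1&1\\0&1\end{pmatrix}$. $p(n)$ is the number of allowed blocks of length $n$ (labellings $t|_{\Delta_n}$, $\Delta_n$ the words of length $\le n$), and $h_{PS}=\lim_{n\to\infty}\frac{\log p(n)}{1+2+\cdots+2^n}$. *)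

theory Defs
  imports Complex_Main "HOL-Library.FuncSet"
begin

text \<open>Nodes of the binary tree are words over the two directions;
  False stands for a_1 and True for a_2.\<close>

type_synonym node = "bool list"
type_synonym tree = "node \<Rightarrow> nat"
type_synonym mat01 = "nat \<Rightarrow> nat \<Rightarrow> nat"

definition matA :: mat01 where "matA i j = 1"
definition matE :: mat01 where "matE i j = (if i = 0 \<and> j = 1 then 0 else 1)"
definition matG :: mat01 where "matG i j = (if i = 1 \<and> j = 0 then 0 else 1)"

definition tree_shift :: "mat01 \<Rightarrow> mat01 \<Rightarrow> tree set" where
  "tree_shift P Q = {t. (\<forall>x. t x \<in> {0,1}) \<and>
      (\<forall>x. P (t x) (t (x @ [False])) = 1) \<and>
      (\<forall>x. Q (t x) (t (x @ [True])) = 1)}"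

definition Delta :: "nat \<Rightarrow> node set" where
  "Delta n = {x. length x \<le> n}"

definition num_blocks :: "tree set \<Rightarrow> nat \<Rightarrow> nat" where
  "num_blocks X n = card ((\<lambda>t. restrict t (Delta n)) ` X)"

definition hps_seq :: "tree set \<Rightarrow> nat \<Rightarrow> real" where
  "hps_seq X n = ln (real (num_blocks X n)) / (\<Sum>k\<le>n. (2::real) ^ k)"

end

theory Submission
  imports Defs
begin
lemma Delta_mem[simp]: "x \<in> Delta n \<longleftrightarrow> length x \<le> n"
  by (simp add: Delta_def)

lemma finite_Delta: "finite (Delta n)"
proof -
  have "Delta n = {xs. set xs \<subseteq> (UNIV::bool set) \<and> length xs \<le> n}" by (auto simp: Delta_def)
  thus ?thesis using finite_lists_length_le[of "UNIV::bool set" n] by simp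
qed

definition valid :: "mat01 \<Rightarrow> mat01 \<Rightarrow> nat \<Rightarrow> tree \<Rightarrow> bool" where
 "valid P Q n u \<longleftrightarrow> u \<in> Delta n \<rightarrow>\<^sub>E {0,1} \<and>
    (\<forall>x. length x < n \<longrightarrow> P (u x) (u (x@[False])) = 1 \<and> Q (u x) (u (x@[True])) = 1)"

lemma finite_valid: "finite {u. valid P Q n u}"
  by (rule finite_subset[OF _ finite_PiE[of "Delta n" "\<lambda>_. {0::nat,1}"]])
     (auto simp: valid_def finite_Delta)

lemma image_restrict:
  assumes d: "d \<in> {0,1}" and PQ: "\<And>i. i \<in> {0,1} \<Longrightarrow> P i d = 1 \<and> Q i d = 1"
  shows "(\<lambda>t. restrict t (Delta n)) ` tree_shift P Q = {u. valid P Q n u}"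
proof
  show "(\<lambda>t. restrict t (Delta n)) ` tree_shift P Q \<subseteq> {u. valid P Q n u}"
    by (auto simp: tree_shift_def valid_def) (metis less_numeral_extra(3))
next
  show "{u. valid P Q n u} \<subseteq> (\<lambda>t. restrict t (Delta n)) ` tree_shift P Q"
  proof
    fix u assume "u \<in> {u. valid P Q n u}"
    hence v: "valid P Q n u" by simp
    define t where "t = (\<lambda>x. if length x \<le> n then u x else d)"
    have u01: "length x \<le> n \<Longrightarrow> u x \<in> {0,1}" for x using v by (auto simp: valid_def)
    have "t \<in> tree_shift P Q"
      unfolding tree_shift_def
    proof (intro CollectI conjI allI)
      fix x
      show "t x \<in> {0,1}" using u01 d by (auto simp: t_def)
      show "P (t x) (t (x @ [False])) = 1"
        using v u01[of x] PQ[of d] PQ[of "u x"] d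
        by (cases "length x < n") (auto simp: t_def valid_def)
      show "Q (t x) (t (x @ [True])) = 1"
        using v u01[of x] PQ[of d] PQ[of "u x"] d
        by (cases "length x < n") (auto simp: t_def valid_def)
    qed
    moreover have "restrict t (Delta n) = u"
      using v by (auto simp: t_def valid_def PiE_def extensional_def fun_eq_iff)
    ultimately show "u \<in> (\<lambda>t. restrict t (Delta n)) ` tree_shift P Q" by force
  qed
qed

definition V where "V P Q n s = {u. valid P Q n u \<and> u [] = s}"
definition W :: "mat01 \<Rightarrow> mat01 \<Rightarrow> mat01 \<Rightarrow> nat \<Rightarrow> nat \<Rightarrow> tree set" where "W P Q M n s = {u. valid P Q n u \<and> M s (u []) = 1}"

lemma valid_root: "valid P Q n u \<Longrightarrow> u [] \<in> {0,1}"
  by (auto simp: valid_def)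

lemma card_valid: "card {u. valid P Q n u} = card (V P Q n 0) + card (V P Q n 1)"
proof -
  have "{u. valid P Q n u} = V P Q n 0 \<union> V P Q n 1"
    using valid_root by (auto simp: V_def)
  moreover have "finite (V P Q n s)" for s
    by (rule finite_subset[OF _ finite_valid]) (auto simp: V_def)
  moreover have "V P Q n 0 \<inter> V P Q n 1 = {}" by (auto simp: V_def)
  ultimately show ?thesis by (simp only: card_Un_disjoint)
qed

lemma card_W: "card (W P Q M n s) = (if M s 0 = 1 then card (V P Q n 0) else 0)
    + (if M s 1 = 1 then card (V P Q n 1) else 0)"
proof -
  have eq: "W P Q M n s = (if M s 0 = 1 then V P Q n 0 else {}) \<union> (if M s 1 = 1 then V P Q n 1 else {})"
    using valid_root[of P Q n] by (auto simp: V_def W_def) metis+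
  have f0: "finite (V P Q n 0)" and f1: "finite (V P Q n 1)"
    by (rule finite_subset[OF _ finite_valid], auto simp: V_def)+
  have d: "V P Q n 0 \<inter> V P Q n 1 = {}" by (auto simp: V_def)
  have cu: "card (V P Q n 0 \<union> V P Q n 1) = card (V P Q n 0) + card (V P Q n 1)"
    by (rule card_Un_disjoint[OF f0 f1 d])
  show ?thesis unfolding eq
    using cu by (cases "M s 0 = 1"; cases "M s 1 = 1") simp_all
qed

lemma card_V0: "s \<in> {0,1} \<Longrightarrow> card (V P Q 0 s) = 1"
proof -
  assume s: "s \<in> {0,1}"
  have "V P Q 0 s = {\<lambda>x. if x = [] then s else undefined}"
  proof (intro set_eqI iffI)
    fix u :: tree assume "u \<in> V P Q 0 s"
    thus "u \<in> {\<lambda>x. if x = [] then s else undefined}"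
      by (auto simp: V_def valid_def PiE_def extensional_def fun_eq_iff)
  next
    fix u :: tree assume "u \<in> {\<lambda>x. if x = [] then s else undefined}"
    thus "u \<in> V P Q 0 s" using s by (auto simp: V_def valid_def PiE_def extensional_def)
  qed
  thus ?thesis by simp
qed

lemma card_VSuc:
  assumes s: "s \<in> {0,1}"
  shows "card (V P Q (Suc n) s) = card (W P Q P n s) * card (W P Q Q n s)"
proof -
  define f where "f = (\<lambda>u::tree. (restrict (\<lambda>y. u (False#y)) (Delta n), restrict (\<lambda>y. u (True#y)) (Delta n)))"
  define g where "g = (\<lambda>(L::tree,R::tree). (\<lambda>x::node. if length x \<le> Suc n then
      (case x of [] \<Rightarrow> s | b#y \<Rightarrow> if b then R y else L y) else undefined))"
  have "bij_betw f (V P Q (Suc n) s) (W P Q P n s \<times> W P Q Q n s)"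
  proof (rule bij_betw_byWitness[where f'=g])
    show "\<forall>a\<in>V P Q (Suc n) s. g (f a) = a"
    proof
      fix u assume u: "u \<in> V P Q (Suc n) s"
      show "g (f u) = u"
      proof
        fix x show "g (f u) x = u x"
          using u by (cases x) (auto simp: f_def g_def V_def valid_def PiE_def extensional_def)
      qed
    qed
    show "\<forall>a'\<in>W P Q P n s \<times> W P Q Q n s. f (g a') = a'"
    proof
      fix a' assume a': "a' \<in> W P Q P n s \<times> W P Q Q n s"
      obtain L R where LR: "a' = (L,R)" by force
      have eL: "L y = undefined" if "\<not> length y \<le> n" for y
        using a' LR that by (auto simp: W_def valid_def PiE_def extensional_def)
      have eR: "R y = undefined" if "\<not> length y \<le> n" for y
        using a' LR that by (auto simp: W_def valid_def PiE_def extensional_def)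
      have "restrict (\<lambda>y. g (L,R) (False#y)) (Delta n) = L"
      proof
        fix y show "restrict (\<lambda>y. g (L,R) (False#y)) (Delta n) y = L y"
          using eL[of y] by (cases "length y \<le> n") (simp_all add: g_def)
      qed
      moreover have "restrict (\<lambda>y. g (L,R) (True#y)) (Delta n) = R"
      proof
        fix y show "restrict (\<lambda>y. g (L,R) (True#y)) (Delta n) y = R y"
          using eR[of y] by (cases "length y \<le> n") (simp_all add: g_def)
      qed
      ultimately show "f (g a') = a'" by (simp add: f_def LR)
    qed
    show "f ` V P Q (Suc n) s \<subseteq> W P Q P n s \<times> W P Q Q n s"
    proof
      fix p assume "p \<in> f ` V P Q (Suc n) s"
      then obtain u where u: "u \<in> V P Q (Suc n) s" and p: "p = f u" by blast
      have v: "valid P Q (Suc n) u" and u0: "u [] = s" using u by (auto simp: V_def)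
      have c: "length x < Suc n \<Longrightarrow> P (u x) (u (x@[False])) = 1 \<and> Q (u x) (u (x@[True])) = 1" for x
        using v by (auto simp: valid_def)
      have r: "length x \<le> Suc n \<Longrightarrow> u x \<in> {0,1}" for x
        using v by (auto simp: valid_def)
      have vb: "valid P Q n (restrict (\<lambda>y. u (b#y)) (Delta n))" for b
        unfolding valid_def
      proof (intro conjI allI impI)
        show "restrict (\<lambda>y. u (b # y)) (Delta n) \<in> Delta n \<rightarrow>\<^sub>E {0, 1}"
          using r by auto
        fix x :: node assume "length x < n"
        thus "P (restrict (\<lambda>y. u (b # y)) (Delta n) x) (restrict (\<lambda>y. u (b # y)) (Delta n) (x @ [False])) = 1"
             "Q (restrict (\<lambda>y. u (b # y)) (Delta n) x) (restrict (\<lambda>y. u (b # y)) (Delta n) (x @ [True])) = 1"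
          using c[of "b#x"] by auto
      qed
      show "p \<in> W P Q P n s \<times> W P Q Q n s"
        using vb[of False] vb[of True] c[of "[]"] u0 by (auto simp: p f_def W_def)
    qed
    show "g ` (W P Q P n s \<times> W P Q Q n s) \<subseteq> V P Q (Suc n) s"
    proof
      fix u assume "u \<in> g ` (W P Q P n s \<times> W P Q Q n s)"
      then obtain L R where L: "L \<in> W P Q P n s" and R: "R \<in> W P Q Q n s" and u: "u = g (L,R)" by blast
      have vL: "valid P Q n L" and vR: "valid P Q n R" and L0: "P s (L []) = 1" and R0: "Q s (R []) = 1"
        using L R by (auto simp: W_def)
      have pie: "u \<in> Delta (Suc n) \<rightarrow>\<^sub>E {0, 1}"
        proof -
          have h1: "length y \<le> n \<Longrightarrow> L y \<noteq> Suc 0 \<Longrightarrow> L y = 0" for y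
            using vL by (auto simp: valid_def)
          have h2: "length y \<le> n \<Longrightarrow> R y \<noteq> Suc 0 \<Longrightarrow> R y = 0" for y
            using vR by (auto simp: valid_def)
          show ?thesis using s by (auto simp: u g_def PiE_iff extensional_def h1 h2 split: list.splits)
        qed
      have con: "\<forall>x. length x < Suc n \<longrightarrow> P (u x) (u (x @ [False])) = 1 \<and> Q (u x) (u (x @ [True])) = 1"
      proof (intro allI impI)
        fix x :: node assume x: "length x < Suc n"
        show "P (u x) (u (x @ [False])) = 1 \<and> Q (u x) (u (x @ [True])) = 1"
        proof (cases x)
          case Nil thus ?thesis using L0 R0 by (simp add: u g_def)
        next
          case (Cons b y)
          thus ?thesis using vL vR x by (cases b) (auto simp: u g_def valid_def)
        qed
      qed
      have "valid P Q (Suc n) u" using pie con by (simp add: valid_def)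
      moreover have "u [] = s" by (simp add: u g_def)
      ultimately show "u \<in> V P Q (Suc n) s" by (simp add: V_def)
    qed
  qed
  hence "card (V P Q (Suc n) s) = card (W P Q P n s \<times> W P Q Q n s)" by (rule bij_betw_same_card)
  thus ?thesis by (simp add: card_cartesian_product)
qed

definition ff :: "nat \<Rightarrow> real" where "ff n = ln (real n + 2) / 2 ^ (n + 2)"

lemma lin_le_pow: "real k + 1 \<le> 2 * (3/2::real) ^ k"
proof (induction k)
  case 0 thus ?case by simp
next
  case (Suc k)
  show ?case
  proof (cases "k = 0")
    case True thus ?thesis by simp
  next
    case False
    hence "real k \<ge> 1" by simp
    hence "real (Suc k) + 1 \<le> (3/2) * (real k + 1)" by simp
    also have "\<dots> \<le> (3/2) * (2 * (3/2::real) ^ k)" using Suc.IH by simp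
    finally show ?thesis by simp
  qed
qed

lemma t2aux: "(\<lambda>n. 1 / (2 ^ (n+1) - 1 :: real)) \<longlonglongrightarrow> 0"
proof (rule real_tendsto_sandwich[where f="\<lambda>_. 0" and h="\<lambda>n. (1/2)^n"])
  show "\<forall>\<^sub>F n in sequentially. 0 \<le> 1 / (2 ^ (n+1) - 1 :: real)"
  proof (intro always_eventually allI)
    fix n :: nat have "(1::real) \<le> 2^n" by simp
    moreover have "(2::real)^(n+1) = 2*2^n" by simp
    ultimately have "0 \<le> (2 ^ (n+1) - 1 :: real)" by linarith
    thus "0 \<le> 1 / (2 ^ (n+1) - 1 :: real)" by simp
  qed
  show "\<forall>\<^sub>F n in sequentially. 1 / (2 ^ (n+1) - 1 :: real) \<le> (1/2)^n"
  proof (intro always_eventually allI)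
    fix n :: nat
    have a: "(1::real) \<le> 2^n" by simp
    have b: "(2::real)^(n+1) = 2*2^n" by simp
    have d1: "2^n \<le> (2^(n+1)-1::real)" using a b by linarith
    have d2: "0 < (2^(n+1)-1::real)" using a b by linarith
    have d3: "0 < (2^(n+1)-1::real)*2^n" using d2 by simp
    have "1 / (2 ^ (n+1) - 1 :: real) \<le> 1 / 2^n"
      using d1 d3 by (intro divide_left_mono) auto
    thus "1 / (2 ^ (n+1) - 1 :: real) \<le> (1/2)^n" by (simp add: power_one_over)
  qed
  show "(\<lambda>n. (1/2::real)^n) \<longlonglongrightarrow> 0" by (rule LIMSEQ_power_zero) simp
qed simp

lemma t2: "(\<lambda>n. 2 ^ (n+1) / (2 ^ (n+1) - 1 :: real)) \<longlonglongrightarrow> 1"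
proof -
  have "2 ^ (n+1) / (2 ^ (n+1) - 1 :: real) = 1 + 1 / (2 ^ (n+1) - 1)" for n
  proof -
    have "(1::real) \<le> 2^n" by simp
    moreover have "(2::real)^(n+1) = 2*2^n" by simp
    ultimately have "(2 ^ (n+1) - 1 :: real) \<noteq> 0" by linarith
    thus ?thesis by (simp add: field_simps)
  qed
  moreover have "(\<lambda>n. 1 + 1 / (2 ^ (n+1) - 1 :: real)) \<longlonglongrightarrow> 1 + 0"
    by (intro tendsto_add tendsto_const t2aux)
  ultimately show ?thesis by simp
qed

lemma t1: "(\<lambda>n. ln (real n + 2) / (2 ^ (n+1) - 1 :: real)) \<longlonglongrightarrow> 0"
proof (rule real_tendsto_sandwich[where f="\<lambda>_. 0" and h="\<lambda>n. 2 * (3/4)^n"])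
  show "\<forall>\<^sub>F n in sequentially. 0 \<le> ln (real n + 2) / (2 ^ (n+1) - 1 :: real)"
  proof (intro always_eventually allI)
    fix n :: nat have "(1::real) \<le> 2^n" by simp
    moreover have "(2::real)^(n+1) = 2*2^n" by simp
    ultimately have "0 \<le> (2 ^ (n+1) - 1 :: real)" by linarith
    thus "0 \<le> ln (real n + 2) / (2 ^ (n+1) - 1 :: real)" by simp
  qed
  show "\<forall>\<^sub>F n in sequentially. ln (real n + 2) / (2 ^ (n+1) - 1 :: real) \<le> 2 * (3/4)^n"
  proof (intro always_eventually allI)
    fix n :: nat have "(1::real) \<le> 2^n" by simp
    moreover have "(2::real)^(n+1) = 2*2^n" by simp
    ultimately have h: "2^n \<le> (2 ^ (n+1) - 1 :: real)" by linarith
    have "ln (real n + 2) \<le> real n + 1" using ln_le_minus_one[of "real n + 2"] by simp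
    also have "\<dots> \<le> 2 * (3/2) ^ n" by (rule lin_le_pow)
    finally have l: "ln (real n + 2) \<le> 2 * (3/2) ^ n" .
    have "ln (real n + 2) / (2 ^ (n+1) - 1 :: real) \<le> 2 * (3/2) ^ n / 2^n"
      using h l by (intro frac_le) auto
    also have "\<dots> = 2 * (3/4) ^ n" by (simp add: power_divide field_simps flip: power_mult_distrib)
    finally show "ln (real n + 2) / (2 ^ (n+1) - 1 :: real) \<le> 2 * (3/4)^n" .
  qed
  show "(\<lambda>n. 2 * (3/4::real)^n) \<longlonglongrightarrow> 0"
    using tendsto_mult[OF tendsto_const LIMSEQ_power_zero[of "3/4::real"]] by simp
qed simp

lemma ff_summable: "summable ff"
proof (rule summable_comparison_test[OF _ summable_mult[OF summable_geometric[of "3/4::real"], of "1/2"]])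
  show "\<exists>N. \<forall>n\<ge>N. norm (ff n) \<le> 1/2 * (3/4) ^ n"
  proof (intro exI allI impI)
    fix n :: nat
    have l0: "ln (real n + 2) \<ge> 0" by simp
    have "ln (real n + 2) \<le> real n + 1" using ln_le_minus_one[of "real n + 2"] by simp
    also have "\<dots> \<le> 2 * (3/2) ^ n" by (rule lin_le_pow)
    finally have "ln (real n + 2) \<le> 2 * (3/2) ^ n" .
    hence "ln (real n + 2) / 2 ^ (n+2) \<le> 2 * (3/2) ^ n / 2 ^ (n+2)"
      by (rule divide_right_mono) simp
    also have "2 * (3/2) ^ n / 2 ^ (n+2) = 1/2 * (3/4::real) ^ n"
      by (simp add: power_divide field_simps power_add flip: power_mult_distrib)
    finally show "norm (ff n) \<le> 1/2 * (3/4) ^ n" using l0 by (simp add: ff_def)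
  qed
qed simp

lemma analytic:
  fixes x y :: "nat \<Rightarrow> nat"
  assumes x0: "x 0 = 1" and y0: "y 0 = 1"
    and xS: "\<And>n. x (Suc n) = (x n + y n) * x n"
    and yS: "\<And>n. y (Suc n) = (x n + y n) * (x n + y n)"
  shows "(\<lambda>n. ln (real (x n + y n)) / (\<Sum>k\<le>n. (2::real) ^ k)) \<longlonglongrightarrow> suminf ff"
proof -
  have s: "x n + y n = (n + 2) * x n" for n
    by (induction n) (simp_all add: x0 y0 xS yS algebra_simps)
  have sR: "real (x n + y n) = (real n + 2) * real (x n)" for n
    by (subst s) (simp add: algebra_simps)
  have pos: "x n > 0" for n
    by (induction n) (simp_all add: x0 xS)
  have xS': "real (x (Suc n)) = (real n + 2) * real (x n) ^ 2" for n
  proof -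
    have "real (x n + y n) = (real n + 2) * real (x n)" by (subst s) (simp add: algebra_simps)
    thus ?thesis by (simp add: xS power2_eq_square)
  qed
  have lx: "ln (real (x n)) / 2 ^ n = 2 * (\<Sum>k<n. ff k)" for n
  proof (induction n)
    case 0 thus ?case by (simp add: x0)
  next
    case (Suc n)
    have "ln (real (x (Suc n))) = ln (real n + 2) + 2 * ln (real (x n))"
      using pos[of n] by (simp add: xS' ln_mult ln_realpow)
    hence "ln (real (x (Suc n))) / 2 ^ Suc n = ln (real n + 2) / 2 ^ Suc n + ln (real (x n)) / 2 ^ n"
      by (simp add: field_simps)
    also have "\<dots> = 2 * ff n + 2 * (\<Sum>k<n. ff k)" using Suc.IH by (simp add: ff_def field_simps)
    finally show ?case by simp
  qed
  have D: "(\<Sum>k\<le>n. (2::real) ^ k) = 2 ^ (n+1) - 1" for n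
    by (induction n) simp_all
  have eq: "ln (real (x n + y n)) / (\<Sum>k\<le>n. (2::real) ^ k)
      = ln (real n + 2) / (2 ^ (n+1) - 1) + (2 ^ (n+1) / (2 ^ (n+1) - 1)) * (\<Sum>k<n. ff k)" for n
  proof -
    have "ln (real (x n + y n)) = ln (real n + 2) + ln (real (x n))"
      using pos[of n] by (simp only: sR ln_mult) simp
    also have "ln (real (x n)) = 2 ^ n * (2 * (\<Sum>k<n. ff k))"
      using lx[of n] by (simp add: field_simps)
    finally show ?thesis by (simp add: D add_divide_distrib)
  qed
  have t3: "(\<lambda>n. \<Sum>k<n. ff k) \<longlonglongrightarrow> suminf ff"
    using ff_summable summable_LIMSEQ by blast
  have "(\<lambda>n. ln (real n + 2) / (2 ^ (n+1) - 1) + (2 ^ (n+1) / (2 ^ (n+1) - 1)) * (\<Sum>k<n. ff k))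
     \<longlonglongrightarrow> 0 + 1 * suminf ff"
    by (intro tendsto_add tendsto_mult t1 t2 t3)
  hence "(\<lambda>n. ln (real n + 2) / (2 ^ (n+1) - 1) + (2 ^ (n+1) / (2 ^ (n+1) - 1)) * (\<Sum>k<n. ff k))
     \<longlonglongrightarrow> suminf ff" by simp
  thus ?thesis by (simp only: eq)
qed

lemma hps_conv:
  assumes d: "d \<in> {0,1}" and PQ: "\<And>i. i \<in> {0,1} \<Longrightarrow> P i d = 1 \<and> Q i d = 1"
    and x0: "x 0 = 1" and y0: "y 0 = 1"
    and xS: "\<And>n. x (Suc n) = (x n + y n) * x n"
    and yS: "\<And>n. y (Suc n) = (x n + y n) * (x n + y n)"
    and xy: "\<And>n. card (V P Q n 0) + card (V P Q n 1) = x n + y n"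
  shows "hps_seq (tree_shift P Q) \<longlonglongrightarrow> suminf ff"
proof -
  have img: "(\<lambda>t. restrict t (Delta n)) ` tree_shift P Q = {u. valid P Q n u}" for n
    by (rule image_restrict[OF d]) (rule PQ)
  have "hps_seq (tree_shift P Q) = (\<lambda>n. ln (real (x n + y n)) / (\<Sum>k\<le>n. (2::real) ^ k))"
    unfolding hps_seq_def num_blocks_def img card_valid xy by (rule ext) simp
  thus ?thesis using analytic[of x y, OF x0 y0 xS yS] by (simp only:)
qed

theorem mainTheorem14:
  shows "\<exists>S. (\<lambda>n. ln (real n + 2) / 2 ^ (n + 2)) sums S
           \<and> hps_seq (tree_shift matA matE) \<longlonglongrightarrow> S
           \<and> hps_seq (tree_shift matA matG) \<longlonglongrightarrow> S"
proof (intro exI conjI)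
  show "(\<lambda>n. ln (real n + 2) / 2 ^ (n + 2)) sums suminf ff"
    using ff_summable summable_sums unfolding ff_def by blast
  show "hps_seq (tree_shift matA matE) \<longlonglongrightarrow> suminf ff"
  proof (rule hps_conv[where d=0 and x="\<lambda>n. card (V matA matE n 0)" and y="\<lambda>n. card (V matA matE n 1)"])
    fix n
    show "card (V matA matE (Suc n) 0) = (card (V matA matE n 0) + card (V matA matE n 1)) * card (V matA matE n 0)"
      using card_VSuc[of 0 matA matE n] by (simp add: card_W matA_def matE_def)
    show "card (V matA matE (Suc n) 1) = (card (V matA matE n 0) + card (V matA matE n 1)) * (card (V matA matE n 0) + card (V matA matE n 1))"
      using card_VSuc[of 1 matA matE n] by (simp add: card_W matA_def matE_def)
  qed (auto simp: card_V0 matA_def matE_def)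
  show "hps_seq (tree_shift matA matG) \<longlonglongrightarrow> suminf ff"
  proof (rule hps_conv[where d=1 and x="\<lambda>n. card (V matA matG n 1)" and y="\<lambda>n. card (V matA matG n 0)"])
    fix n
    show "card (V matA matG (Suc n) 1) = (card (V matA matG n 1) + card (V matA matG n 0)) * card (V matA matG n 1)"
      using card_VSuc[of 1 matA matG n] by (simp add: card_W matA_def matG_def)
    show "card (V matA matG (Suc n) 0) = (card (V matA matG n 1) + card (V matA matG n 0)) * (card (V matA matG n 1) + card (V matA matG n 0))"
      using card_VSuc[of 0 matA matG n] by (simp add: card_W matA_def matG_def add.commute)
  qed (auto simp: card_V0 matA_def matG_def)
qed

end
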